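(* In the two-door cascading memoryless semi-fractional setting, there is an optimal semi-fractional sequence $\pi^\star$ (i.e. $\mathbb{E}[\pi^\star]\le\mathbb{E}[\pi]$ for every semi-fractional sequence $\pi$) of the form $1^s(2\,1^t)^\infty$ for some positive reals $s,t$, and its expected running time is $$\mathbb{E}[\pi^\star]=\min_{z\in[0,1]}\left(\log_{q_1}(1-z)+\frac{c+(1-p_2z)\log_{q_1}(1-p_2z)}{p_2z}\right).$$
   Context: Two cascading memoryless doors with durations: parameters $p_1,p_2\in(0,1)$, $q_1=1-p_1$, $q_2=1-p_2$, and $c>0$. Both doors start closed. A semi-fractional sequence is an infinite alternating sequence of knocks $1^{t_1}\,2\,1^{t_2}\,2\cdots$ with real $t_j\ge0$. A 1-knock $1^t$ takes $t$ time units and, if door 1 is closed, opens it with probability $1-q_1^t$, independently of everything else. A 2-knock takes $c$ time units and opens door 2 with probability $p_2$ (independently) if door 1 is open at that time, and with probability $0$ otherwise. There is no feedback. The running time is the time at which both doors are open, and $\mathbb{E}[\pi]$ is its expectation for sequence $\pi$. $(2\,1^t)^\infty$ denotes infinite repetition. *)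

theory Defs
  imports "HOL-Probability.Probability"
begin

text \<open>A semi-fractional sequence 1^(t 0) 2 1^(t 1) 2 1^(t 2) 2 ... is given by
  t :: nat \<Rightarrow> real with all t i \<ge> 0.  Knock j (0-based) of kind 1 is the
  1-knock 1^(t j); knock j of kind 2 is the 2-knock immediately after it.

  Outcome space: for every index i a pair (a_i, b_i) of independent coins:
  a_i says whether the i-th 1-knock would open door 1 if it is closed
  (probability 1 - q1 powr (t i)), b_i says whether the i-th 2-knock would
  open door 2 if door 1 is open (probability p2).\<close>

definition knock_space :: "real \<Rightarrow> real \<Rightarrow> (nat \<Rightarrow> real) \<Rightarrow> (nat \<Rightarrow> bool \<times> bool) measure" where
  "knock_space p1 p2 t =
     (\<Pi>\<^sub>M i\<in>UNIV. measure_pmf (pair_pmf (bernoulli_pmf (1 - (1 - p1) powr t i)) (bernoulli_pmf p2)))"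

definition door1_open_at :: "(nat \<Rightarrow> bool \<times> bool) \<Rightarrow> nat \<Rightarrow> bool" where
  "door1_open_at \<omega> j = (\<exists>i\<le>j. fst (\<omega> i))"

definition door2_opens_at :: "(nat \<Rightarrow> bool \<times> bool) \<Rightarrow> nat \<Rightarrow> bool" where
  "door2_opens_at \<omega> j = (door1_open_at \<omega> j \<and> snd (\<omega> j))"

definition running_time :: "real \<Rightarrow> (nat \<Rightarrow> real) \<Rightarrow> (nat \<Rightarrow> bool \<times> bool) \<Rightarrow> ennreal" where
  "running_time c t \<omega> =
     (if \<exists>j. door2_opens_at \<omega> j
      then ennreal (\<Sum>i\<le>(LEAST j. door2_opens_at \<omega> j). t i + c)
      else \<infinity>)"

definition expected_time :: "real \<Rightarrow> real \<Rightarrow> real \<Rightarrow> (nat \<Rightarrow> real) \<Rightarrow> ennreal" where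
  "expected_time p1 p2 c t = (\<integral>\<^sup>+ \<omega>. running_time c t \<omega> \<partial>knock_space p1 p2 t)"

definition semi_fractional :: "(nat \<Rightarrow> real) \<Rightarrow> bool" where
  "semi_fractional t = (\<forall>i. 0 \<le> t i)"

definition periodic_seq :: "real \<Rightarrow> real \<Rightarrow> nat \<Rightarrow> real" where
  "periodic_seq s t = (\<lambda>i. if i = 0 then s else t)"

end

theory Submission imports Defs begin

definition Xf :: "real \<Rightarrow> (nat \<Rightarrow> real) \<Rightarrow> nat \<Rightarrow> real" where
  "Xf q t j = (\<Prod>i<j. q powr t i)"

fun Pf :: "real \<Rightarrow> real \<Rightarrow> (nat \<Rightarrow> real) \<Rightarrow> nat \<Rightarrow> real" where
  "Pf q p t 0 = 1"
| "Pf q p t (Suc j) = (1 - p) * Pf q p t j + p * Xf q t (Suc j)"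

lemma Xf_Suc: "Xf q t (Suc j) = Xf q t j * q powr t j"
  by (simp add: Xf_def)

lemma Xf_pos: "0 < q \<Longrightarrow> 0 < Xf q t j"
  by (simp add: Xf_def prod_pos)

lemma lower_inv:
  fixes q p c m :: real and t :: "nat \<Rightarrow> real"
  assumes q: "0 < q" "q < 1" and p: "0 < p" "p < 1" and t: "\<And>i. 0 \<le> t i"
    and key: "\<And>z. 0 \<le> z \<Longrightarrow> z < 1 \<Longrightarrow>
        m*p*z \<le> c + p*z*log q (1-z) + (1-p*z)*log q (1-p*z)"
  shows "Xf q t N \<le> Pf q p t N \<and> 0 < Pf q p t N \<and>
    m*(1 - Pf q p t N) + Pf q p t N * log q (Xf q t N / Pf q p t N) \<le> (\<Sum>j<N. (c + t j) * Pf q p t j)"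
proof (induction N)
  case 0
  then show ?case by (simp add: Xf_def)
next
  case (Suc N)
  define P where "P = Pf q p t N"
  define X where "X = Xf q t N"
  define E where "E = (\<Sum>j<N. (c + t j) * Pf q p t j)"
  define X' where "X' = Xf q t (Suc N)"
  define P' where "P' = Pf q p t (Suc N)"
  define u where "u = X' / P"
  define z where "z = 1 - u"
  have X0: "0 < X" unfolding X_def by (rule Xf_pos[OF q(1)])
  have IH: "X \<le> P" "0 < P" "m*(1-P) + P * log q (X/P) \<le> E"
    using Suc.IH unfolding P_def X_def E_def by auto
  have qt: "0 < q powr t N" "q powr t N \<le> 1"
    using q t by (auto intro: powr_le1)
  have X'eq: "X' = X * q powr t N" unfolding X'_def X_def by (rule Xf_Suc)
  have u0: "0 < u" unfolding u_def X'eq using X0 qt IH by simp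
  have Xq: "X * q powr t N \<le> P"
  proof -
    have "X * q powr t N \<le> X * 1" using X0 qt by (intro mult_left_mono) auto
    then show ?thesis using IH(1) by simp
  qed
  have u1: "u \<le> 1" unfolding u_def X'eq using Xq IH(2) by simp
  have z: "0 \<le> z" "z < 1" using u0 u1 unfolding z_def by auto
  have P'eq: "P' = P * (1 - p*z)"
  proof -
    have "P' = (1-p)*P + p*X'" unfolding P'_def P_def X'_def by simp
    also have "\<dots> = P * (1 - p*z)" unfolding z_def u_def using IH(2)
      by (simp add: field_simps)
    finally show ?thesis .
  qed
  have pzz: "p*z \<le> 1*z" using p z by (intro mult_right_mono) auto
  have pz: "0 < 1 - p*z" using pzz z by simp
  have lu: "log q (X/P) + t N = log q u"
  proof -
    have "u = (X/P) * q powr t N" unfolding u_def X'eq by simp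
    then have "log q u = log q (X/P) + log q (q powr t N)"
      using X0 IH qt by (simp only: log_mult) simp
    also have "log q (q powr t N) = t N" using q by (simp add: log_powr_cancel)
    finally show ?thesis by simp
  qed
  have lu2: "log q (X'/P') = log q u - log q (1-p*z)"
  proof -
    have "X'/P' = u / (1-p*z)" unfolding P'eq u_def by simp
    then show ?thesis using u0 pz by (simp add: log_divide)
  qed
  have k: "m*p*z \<le> c + p*z*log q u + (1-p*z)*log q (1-p*z)"
    using key[OF z] unfolding z_def by simp
  have k2: "P*(m*p*z) \<le> P*(c + p*z*log q u + (1-p*z)*log q (1-p*z))"
    using k IH(2) by (intro mult_left_mono) auto
  have lXP: "log q (X/P) = log q u - t N" using lu by simp
  have eq: "E + (c + t N) * P - (m*(1-P') + P'*log q (X'/P')) =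
     (E - (m*(1-P) + P*log q (X/P))) + (P*(c + p*z*log q u + (1-p*z)*log q (1-p*z)) - P*(m*p*z))"
    unfolding lu2 lXP unfolding P'eq by (simp add: algebra_simps)
  have "m*(1-P') + P'*log q (X'/P') \<le> E + (c + t N) * P"
    using eq k2 IH(3) by linarith
  moreover have "X' \<le> P'"
  proof -
    have e1: "X' = u * P" unfolding u_def using IH by simp
    have e2: "P*(1-p*z) - u*P = P*(1-p)*(1-u)" unfolding z_def by (simp add: algebra_simps)
    have "0 \<le> P*(1-p)*(1-u)" using IH(2) p u1 by simp
    then show ?thesis unfolding P'eq e1 using e2 by linarith
  qed
  moreover have "0 < P'" unfolding P'eq using IH pz by simp
  ultimately show ?case unfolding P'_def X'_def E_def P_def by simp
qed


lemma Pf_dec: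
  assumes q: "0 < q" "q < 1" and p: "0 < p" "p < 1" and t: "\<And>i. 0 \<le> t i"
    and XP: "Xf q t N \<le> Pf q p t N"
  shows "Pf q p t (Suc N) \<le> Pf q p t N"
proof -
  have "Xf q t (Suc N) \<le> Xf q t N * 1" unfolding Xf_Suc
    using Xf_pos[OF q(1), of t N] q t by (intro mult_left_mono powr_le1) auto
  then have "p * Xf q t (Suc N) \<le> p * Pf q p t N" using XP p by (intro mult_left_mono) auto
  then show ?thesis by (simp add: algebra_simps)
qed

definition vv :: "real \<Rightarrow> real \<Rightarrow> (nat \<Rightarrow> real) \<Rightarrow> nat \<Rightarrow> nat \<Rightarrow> real" where
  "vv q p t k i = (if i < k then q powr t i else if i = k then (1 - q powr t i) * (1 - p) else 1 - p)"

lemma vv_prod_same: "(\<Prod>i<j. vv q p t j i) = Xf q t j"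
  unfolding Xf_def vv_def by (intro prod.cong) auto

lemma vv_sum_Pf: "(\<Sum>k\<le>j. \<Prod>i<j. vv q p t k i) = Pf q p t j"
proof (induction j)
  case 0
  then show ?case by simp
next
  case (Suc j)
  have a: "(\<Sum>k\<le>j. \<Prod>i<Suc j. vv q p t k i) = (\<Sum>k<j. (\<Prod>i<j. vv q p t k i) * (1-p))
       + Xf q t j * ((1 - q powr t j) * (1-p))"
  proof -
    have "(\<Sum>k\<le>j. \<Prod>i<Suc j. vv q p t k i) = (\<Sum>k<Suc j. (\<Prod>i<j. vv q p t k i) * vv q p t k j)"
      by (simp only: lessThan_Suc_atMost[symmetric] prod.lessThan_Suc)
    also have "\<dots> = (\<Sum>k<j. (\<Prod>i<j. vv q p t k i) * vv q p t k j) + (\<Prod>i<j. vv q p t j i) * vv q p t j j"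
      by (rule sum.lessThan_Suc)
    also have "\<dots> = (\<Sum>k<j. (\<Prod>i<j. vv q p t k i) * (1-p)) + Xf q t j * ((1 - q powr t j) * (1-p))"
    proof -
      have c: "(\<Sum>k<j. (\<Prod>i<j. vv q p t k i) * vv q p t k j) = (\<Sum>k<j. (\<Prod>i<j. vv q p t k i) * (1-p))"
        by (intro sum.cong refl) (simp add: vv_def)
      have d: "vv q p t j j = (1 - q powr t j) * (1-p)" by (simp add: vv_def)
      show ?thesis unfolding c d vv_prod_same ..
    qed
    finally show ?thesis .
  qed
  have b: "(\<Sum>k\<le>j. \<Prod>i<j. vv q p t k i) = (\<Sum>k<j. \<Prod>i<j. vv q p t k i) + Xf q t j"
    by (simp add: lessThan_Suc_atMost[symmetric] vv_prod_same)
  have "(\<Sum>k\<le>Suc j. \<Prod>i<Suc j. vv q p t k i) =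
     (\<Sum>k\<le>j. \<Prod>i<Suc j. vv q p t k i) + Xf q t (Suc j)"
    by (simp add: vv_prod_same del: prod.lessThan_Suc)
  also have "\<dots> = (1-p) * Pf q p t j + p * Xf q t (Suc j)"
  proof -
    define S where "S = (\<Sum>k<j. \<Prod>i<j. vv q p t k i)"
    have e1: "(\<Sum>k<j. (\<Prod>i<j. vv q p t k i) * (1-p)) = S * (1-p)"
      unfolding S_def by (simp add: sum_distrib_right)
    have e2: "Pf q p t j = S + Xf q t j" using b Suc.IH unfolding S_def by simp
    show ?thesis unfolding a e1 e2 Xf_Suc by (simp add: algebra_simps)
  qed
  finally show ?case by simp
qed


definition KK :: "real \<Rightarrow> real \<Rightarrow> (nat \<Rightarrow> real) \<Rightarrow> nat \<Rightarrow> (bool \<times> bool) measure" where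
  "KK p1 p2 t i = measure_pmf (pair_pmf (bernoulli_pmf (1 - (1 - p1) powr t i)) (bernoulli_pmf p2))"

definition Xs :: "nat \<Rightarrow> nat \<Rightarrow> (bool \<times> bool) set" where
  "Xs k i = (if i < k then {ab. \<not> fst ab} else if i = k then {ab. fst ab \<and> \<not> snd ab} else {ab. \<not> snd ab})"

definition AA :: "nat \<Rightarrow> (nat \<Rightarrow> bool \<times> bool) set" where
  "AA j = {\<omega>. \<forall>i<j. \<not> door2_opens_at \<omega> i}"

definition Ev :: "real \<Rightarrow> real \<Rightarrow> (nat \<Rightarrow> real) \<Rightarrow> nat \<Rightarrow> nat \<Rightarrow> (nat \<Rightarrow> bool \<times> bool) set" where
  "Ev p1 p2 t j k = prod_emb UNIV (KK p1 p2 t) {..<j} (PiE {..<j} (Xs k))"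

lemma knock_space_KK: "knock_space p1 p2 t = PiM UNIV (KK p1 p2 t)"
  unfolding knock_space_def KK_def by simp

lemma mem_Ev: "\<omega> \<in> Ev p1 p2 t j k \<longleftrightarrow> (\<forall>i<j. \<omega> i \<in> Xs k i)"
  unfolding Ev_def by (simp add: prod_emb_iff restrict_PiE_iff KK_def Pi_iff) blast

lemma AA_eq: "AA j = (\<Union>k\<in>{..j}. Ev p1 p2 t j k)"
proof (intro equalityI subsetI)
  fix \<omega> assume "\<omega> \<in> AA j"
  then have A: "\<And>i. i < j \<Longrightarrow> \<not> door2_opens_at \<omega> i" by (simp add: AA_def)
  show "\<omega> \<in> (\<Union>k\<in>{..j}. Ev p1 p2 t j k)"
  proof (cases "\<exists>k<j. fst (\<omega> k)")
    case True
    define k where "k = (LEAST k. fst (\<omega> k))"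
    have fk: "fst (\<omega> k)" unfolding k_def using True by (metis LeastI)
    have kj: "k < j" unfolding k_def using True by (meson Least_le order.strict_trans1)
    have lt: "\<And>i. i < k \<Longrightarrow> \<not> fst (\<omega> i)" unfolding k_def by (rule not_less_Least)
    have "\<forall>i<j. \<omega> i \<in> Xs k i"
    proof (intro allI impI)
      fix i assume ij: "i < j"
      show "\<omega> i \<in> Xs k i"
      proof (cases "k \<le> i")
        case True
        then have "door1_open_at \<omega> i" unfolding door1_open_at_def using fk by blast
        then have "\<not> snd (\<omega> i)" using A[OF ij] by (simp add: door2_opens_at_def)
        then show ?thesis using True fk by (auto simp: Xs_def)
      next
        case False
        then show ?thesis using lt by (simp add: Xs_def)
      qed
    qed
    then show ?thesis using kj by (auto simp: mem_Ev)
  next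
    case False
    then have "\<forall>i<j. \<omega> i \<in> Xs j i" by (simp add: Xs_def)
    then show ?thesis by (auto simp: mem_Ev)
  qed
next
  fix \<omega> assume "\<omega> \<in> (\<Union>k\<in>{..j}. Ev p1 p2 t j k)"
  then obtain k where kj: "k \<le> j" and X: "\<And>i. i < j \<Longrightarrow> \<omega> i \<in> Xs k i" by (auto simp: mem_Ev)
  have "\<not> door2_opens_at \<omega> i" if ij: "i < j" for i
  proof (cases "i < k")
    case True
    have "\<not> fst (\<omega> ia)" if "ia \<le> i" for ia
    proof -
      have "ia < j" "ia < k" using that True ij by auto
      then show ?thesis using X[of ia] by (simp add: Xs_def)
    qed
    then have "\<not> door1_open_at \<omega> i"
      unfolding door1_open_at_def by blast
    then show ?thesis by (simp add: door2_opens_at_def)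
  next
    case False
    then have "\<not> snd (\<omega> i)" using X[OF ij] by (auto simp: Xs_def split: if_splits)
    then show ?thesis by (simp add: door2_opens_at_def)
  qed
  then show "\<omega> \<in> AA j" by (simp add: AA_def)
qed

lemma Ev_disj: "disjoint_family_on (Ev p1 p2 t j) {..j}"
proof (unfold disjoint_family_on_def, intro ballI impI)
  fix k k' assume k: "k \<in> {..j}" "k' \<in> {..j}" "k \<noteq> k'"
  show "Ev p1 p2 t j k \<inter> Ev p1 p2 t j k' = {}"
  proof (rule ccontr)
    assume "Ev p1 p2 t j k \<inter> Ev p1 p2 t j k' \<noteq> {}"
    then obtain \<omega> where "\<omega> \<in> Ev p1 p2 t j k" "\<omega> \<in> Ev p1 p2 t j k'" by blast
    then have a: "\<And>i. i < j \<Longrightarrow> \<omega> i \<in> Xs k i" and b: "\<And>i. i < j \<Longrightarrow> \<omega> i \<in> Xs k' i"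
      by (auto simp: mem_Ev)
    show False
    proof (cases "k < k'")
      case True
      then show False using a[of k] b[of k] k by (auto simp: Xs_def)
    next
      case False
      then have "k' < k" using k by simp
      then show False using a[of k'] b[of k'] k by (auto simp: Xs_def)
    qed
  qed
qed

lemma Ev_sets: "Ev p1 p2 t j k \<in> sets (knock_space p1 p2 t)"
  unfolding Ev_def knock_space_KK by (intro sets_PiM_I) (auto simp: KK_def)

lemma AA_sets: "AA j \<in> sets (knock_space p1 p2 t)"
  unfolding AA_eq[of j p1 p2 t] using Ev_sets by auto


lemma KK_Xs:
  assumes p1: "0 < p1" "p1 < 1" and p2: "0 \<le> p2" "p2 \<le> 1" and t: "0 \<le> t i"
  shows "emeasure (KK p1 p2 t i) (Xs k i) = ennreal (vv (1-p1) p2 t k i)"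
proof -
  define a where "a = 1 - (1-p1) powr t i"
  have qa: "(1-p1) powr t i = 1 - a" unfolding a_def by simp
  have a: "0 \<le> a" "a \<le> 1" unfolding a_def using p1 t by (auto intro: powr_le1)
  have s1: "{ab::bool\<times>bool. \<not> fst ab} = {(False,False),(False,True)}" by auto
  have s2: "{ab::bool\<times>bool. fst ab \<and> \<not> snd ab} = {(True,False)}" by auto
  have s3: "{ab::bool\<times>bool. \<not> snd ab} = {(False,False),(True,False)}" by auto
  have "emeasure (KK p1 p2 t i) (Xs k i) = ennreal (\<Sum>s\<in>Xs k i. pmf (pair_pmf (bernoulli_pmf a) (bernoulli_pmf p2)) s)"
    unfolding KK_def a_def by (rule emeasure_measure_pmf_finite) simp
  also have "(\<Sum>s\<in>Xs k i. pmf (pair_pmf (bernoulli_pmf a) (bernoulli_pmf p2)) s) = vv (1-p1) p2 t k i"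
    unfolding vv_def qa Xs_def using a p2 by (simp add: s1 s2 s3 pmf_pair algebra_simps)
  finally show ?thesis .
qed


lemma vv_nonneg:
  assumes "0 < q" "q < 1" "p \<le> 1" "0 \<le> t i"
  shows "0 \<le> vv q p t k i"
proof -
  have "q powr t i \<le> 1" using assms by (intro powr_le1) auto
  then show ?thesis using assms unfolding vv_def by auto
qed

lemma emeasure_AA:
  assumes p1: "0 < p1" "p1 < 1" and p2: "0 \<le> p2" "p2 \<le> 1" and t: "\<And>i. 0 \<le> t i"
  shows "emeasure (knock_space p1 p2 t) (AA j) = ennreal (Pf (1-p1) p2 t j)"
proof -
  have ev: "emeasure (knock_space p1 p2 t) (Ev p1 p2 t j k) = ennreal (\<Prod>i<j. vv (1-p1) p2 t k i)" for k
  proof -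
    have "emeasure (knock_space p1 p2 t) (Ev p1 p2 t j k) = (\<Prod>i<j. emeasure (KK p1 p2 t i) (Xs k i))"
      unfolding knock_space_KK Ev_def
      by (rule emeasure_PiM_emb) (auto simp: KK_def measure_pmf.prob_space_axioms)
    also have "\<dots> = (\<Prod>i<j. ennreal (vv (1-p1) p2 t k i))"
      using KK_Xs[OF p1 p2 t] by simp
    also have "\<dots> = ennreal (\<Prod>i<j. vv (1-p1) p2 t k i)"
      by (rule prod_ennreal) (use vv_nonneg p1 p2 t in auto)
    finally show ?thesis .
  qed
  have "emeasure (knock_space p1 p2 t) (AA j) = (\<Sum>k\<le>j. emeasure (knock_space p1 p2 t) (Ev p1 p2 t j k))"
    unfolding AA_eq[of j p1 p2 t]
    by (rule sum_emeasure[symmetric]) (use Ev_sets Ev_disj in auto)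
  also have "\<dots> = (\<Sum>k\<le>j. ennreal (\<Prod>i<j. vv (1-p1) p2 t k i))" using ev by simp
  also have "\<dots> = ennreal (\<Sum>k\<le>j. \<Prod>i<j. vv (1-p1) p2 t k i)"
    by (rule sum_ennreal) (use vv_nonneg p1 p2 t in \<open>auto intro: prod_nonneg\<close>)
  finally show ?thesis by (simp add: vv_sum_Pf)
qed


lemma rt_sum:
  assumes c: "0 < c" and t: "\<And>i. 0 \<le> t i"
  shows "running_time c t \<omega> = (\<Sum>j. ennreal (t j + c) * indicator (AA j) \<omega>)"
proof (cases "\<exists>j. door2_opens_at \<omega> j")
  case True
  define J where "J = (LEAST j. door2_opens_at \<omega> j)"
  have dJ: "door2_opens_at \<omega> J" unfolding J_def using True by (metis LeastI)
  have ind: "indicator (AA j) \<omega> = (if j \<le> J then 1 else (0::ennreal))" for j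
  proof (cases "j \<le> J")
    case True
    have "\<not> door2_opens_at \<omega> i" if "i < j" for i
      using that True unfolding J_def by (intro not_less_Least) simp
    then show ?thesis using True by (simp add: AA_def)
  next
    case False
    have "\<omega> \<notin> AA j" unfolding AA_def using dJ False by (auto simp: not_le)
    then show ?thesis using False by simp
  qed
  have "(\<Sum>j. ennreal (t j + c) * indicator (AA j) \<omega>) = (\<Sum>j\<in>{..J}. ennreal (t j + c) * indicator (AA j) \<omega>)"
    by (rule suminf_finite) (auto simp: ind)
  also have "\<dots> = (\<Sum>j\<in>{..J}. ennreal (t j + c))" by (intro sum.cong) (auto simp: ind)
  also have "\<dots> = ennreal (\<Sum>j\<le>J. t j + c)" by (rule sum_ennreal) (use t c in \<open>auto intro: add_nonneg_nonneg\<close>)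
  finally show ?thesis using True unfolding running_time_def J_def by simp
next
  case False
  then have ind: "indicator (AA j) \<omega> = (1::ennreal)" for j by (simp add: AA_def)
  have "(\<Sum>j. ennreal (t j + c)) = top"
  proof (rule ccontr)
    assume "(\<Sum>j. ennreal (t j + c)) \<noteq> top"
    then have "summable (\<lambda>j. t j + c)" using summable_suminf_not_top[of "\<lambda>j. t j + c"] t c
      by (meson add_nonneg_nonneg less_imp_le)
    then have "(\<lambda>j. t j + c) \<longlonglongrightarrow> 0" by (rule summable_LIMSEQ_zero)
    then have "eventually (\<lambda>j. t j + c < c) sequentially" using c by (rule order_tendstoD)
    then have "eventually (\<lambda>j. False) sequentially"
    proof eventually_elim
      fix j assume "t j + c < c"
      then show False using t[of j] by linarith
    qed
    then show False by simp
  qed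
  then show ?thesis using False unfolding running_time_def by (simp add: ind)
qed

lemma expected_formula:
  assumes p1: "0 < p1" "p1 < 1" and p2: "0 \<le> p2" "p2 \<le> 1" and c: "0 < c" and t: "\<And>i. 0 \<le> t i"
  shows "expected_time p1 p2 c t = (\<Sum>j. ennreal ((t j + c) * Pf (1-p1) p2 t j))"
proof -
  have "expected_time p1 p2 c t = (\<integral>\<^sup>+ \<omega>. (\<Sum>j. ennreal (t j + c) * indicator (AA j) \<omega>) \<partial>knock_space p1 p2 t)"
    unfolding expected_time_def by (intro nn_integral_cong) (rule rt_sum[where t=t, OF c t])
  also have "\<dots> = (\<Sum>j. \<integral>\<^sup>+ \<omega>. ennreal (t j + c) * indicator (AA j) \<omega> \<partial>knock_space p1 p2 t)"
    by (rule nn_integral_suminf) (use AA_sets in measurable)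
  also have "\<dots> = (\<Sum>j. ennreal (t j + c) * emeasure (knock_space p1 p2 t) (AA j))"
    by (simp add: nn_integral_cmult_indicator AA_sets)
  also have "\<dots> = (\<Sum>j. ennreal ((t j + c) * Pf (1-p1) p2 t j))"
  proof (intro suminf_cong)
    fix j
    have "0 \<le> t j + c" using t[of j] c by simp
    then show "ennreal (t j + c) * emeasure (knock_space p1 p2 t) (AA j) = ennreal ((t j + c) * Pf (1-p1) p2 t j)"
      unfolding emeasure_AA[OF p1 p2, where t=t, OF t] by (simp only: ennreal_mult')
  qed
  finally show ?thesis .
qed


lemma log_nonneg_small:
  assumes "0 < q" "q < 1" "0 < x" "x \<le> 1"
  shows "0 \<le> log q x"
proof -
  have "ln x \<le> 0" using assms by simp
  moreover have "ln q < 0" using assms by simp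
  ultimately show ?thesis unfolding log_def by (simp add: divide_nonpos_neg)
qed

lemma lower_bound:
  fixes q p c m :: real and t :: "nat \<Rightarrow> real"
  assumes q: "0 < q" "q < 1" and p: "0 < p" "p < 1" and c: "0 < c" and t: "\<And>i. 0 \<le> t i"
    and key: "\<And>z. 0 \<le> z \<Longrightarrow> z < 1 \<Longrightarrow>
        m*p*z \<le> c + p*z*log q (1-z) + (1-p*z)*log q (1-p*z)"
  shows "ennreal m \<le> (\<Sum>j. ennreal ((t j + c) * Pf q p t j))"
proof (rule ccontr)
  define E where "E = (\<Sum>j. ennreal ((t j + c) * Pf q p t j))"
  define S where "S N = (\<Sum>j<N. (t j + c) * Pf q p t j)" for N
  define P where "P = Pf q p t"
  have inv: "Xf q t N \<le> P N \<and> 0 < P N \<and>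
    m*(1 - P N) + P N * log q (Xf q t N / P N) \<le> S N" for N
  proof -
    have eqS: "(\<Sum>j<N. (c + t j) * Pf q p t j) = (\<Sum>j<N. (t j + c) * Pf q p t j)"
      by (intro sum.cong) simp_all
    show ?thesis unfolding S_def P_def eqS[symmetric] by (rule lower_inv[OF q p t key])
  qed
  have dec: "decseq P" unfolding P_def
  proof (rule decseq_SucI)
    fix n show "Pf q p t (Suc n) \<le> Pf q p t n"
      using Pf_dec[OF q p, of t n] t inv[of n] unfolding P_def by blast
  qed
  have S1: "m*(1 - P N) \<le> S N" for N
  proof -
    have "0 \<le> log q (Xf q t N / P N)"
      using inv[of N] Xf_pos[OF q(1), of t N] by (intro log_nonneg_small q) auto
    then have "0 \<le> P N * log q (Xf q t N / P N)" using inv[of N] by simp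
    then show ?thesis using inv[of N] by linarith
  qed
  have S2: "real N * c * P N \<le> S N" for N
  proof -
    have "(\<Sum>j<N. c * P N) \<le> S N" unfolding S_def
    proof (intro sum_mono)
      fix j assume "j \<in> {..<N}"
      then have "P N \<le> P j" using dec by (simp add: decseqD)
      then have "c * P N \<le> c * P j" using c by simp
      also have "\<dots> \<le> (t j + c) * P j" using t[of j] inv[of j] by (simp add: algebra_simps)
      finally show "c * P N \<le> (t j + c) * Pf q p t j" unfolding P_def .
    qed
    then show ?thesis by simp
  qed
  have SE: "ennreal (S N) \<le> E" for N
  proof -
    have "ennreal (S N) = (\<Sum>j<N. ennreal ((t j + c) * Pf q p t j))" unfolding S_def
    proof (subst sum_ennreal)
      fix j
      have "0 \<le> t j + c" "0 \<le> Pf q p t j" using t[of j] c inv[of j] unfolding P_def by auto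
      then show "0 \<le> (t j + c) * Pf q p t j" by simp
    qed simp
    also have "\<dots> \<le> E" unfolding E_def by (rule sum_le_suminf) auto
    finally show ?thesis .
  qed
  assume "\<not> ennreal m \<le> (\<Sum>j. ennreal ((t j + c) * Pf q p t j))"
  then have Em: "E < ennreal m" unfolding E_def by simp
  then obtain e where e: "0 \<le> e" "E = ennreal e"
    by (metis ennreal_cases ennreal_less_top infinity_ennreal_def order.strict_trans not_less_iff_gr_or_eq top_greatest)
  have em: "e < m" using Em e by (simp add: ennreal_less_iff)
  have Se: "S N \<le> e" for N using SE[of N] e by simp
  obtain N :: nat where N: "e*m/(c*(m-e)) < real N" using reals_Archimedean2 by blast
  have cme: "0 < c*(m-e)" using c em by simp
  have N2: "e*m < real N * (c*(m-e))" using N cme by (simp add: divide_less_eq mult.commute)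
  have a1: "m - e \<le> m * P N" using S1[of N] Se[of N] by (simp add: algebra_simps)
  have a2: "real N * c * P N \<le> e" using S2[of N] Se[of N] by linarith
  have "real N * c * (m - e) \<le> real N * c * (m * P N)"
    using a1 c by (intro mult_left_mono) auto
  also have "\<dots> = m * (real N * c * P N)" by simp
  also have "\<dots> \<le> m * e" using a2 em e by (intro mult_left_mono) auto
  finally show False using N2 by (simp add: algebra_simps)
qed


definition ff :: "real \<Rightarrow> real \<Rightarrow> real \<Rightarrow> real \<Rightarrow> real" where
  "ff q p c z = log q (1 - z) + (c + (1 - p * z) * log q (1 - p * z)) / (p * z)"

lemma log_gt_small:
  assumes "0 < q" "q < 1" "0 < x" "x < q powr y"
  shows "y < log q x"
proof -
  have e1: "ln x < ln (q powr y)" by (rule ln_less_cancel_iff[THEN iffD2]) (use assms in auto)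
  have e2: "ln (q powr y) = y * ln q" using assms by (simp add: ln_powr)
  have "ln x < y * ln q" using e1 unfolding e2 .
  moreover have "ln q < 0" using assms by simp
  ultimately show ?thesis unfolding log_def by (simp add: neg_less_divide_eq)
qed

lemma ff_lower:
  assumes q: "0 < q" "q < 1" and p: "0 < p" "p < 1" and c: "0 < c" and z: "0 < z" "z < 1"
  shows "log q (1 - z) \<le> ff q p c z" "c / (p*z) \<le> ff q p c z" "0 \<le> log q (1-z)"
proof -
  have l1: "0 \<le> log q (1 - z)" using q z by (intro log_nonneg_small) auto
  have pz: "0 < p*z" "p*z < 1" using p z mult_strict_mono[of p 1 z 1] by auto
  have l2: "0 \<le> log q (1 - p*z)" using q pz by (intro log_nonneg_small) auto
  have l3: "0 \<le> (1 - p*z) * log q (1 - p*z)" using l2 pz by simp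
  have "0 \<le> (c + (1 - p * z) * log q (1 - p * z)) / (p * z)" using l3 c pz by simp
  then show "log q (1 - z) \<le> ff q p c z" unfolding ff_def by simp
  have "c / (p*z) \<le> (c + (1 - p * z) * log q (1 - p * z)) / (p * z)"
    using l3 pz by (intro divide_right_mono) auto
  then show "c / (p*z) \<le> ff q p c z" unfolding ff_def using l1 by simp
  show "0 \<le> log q (1-z)" by (rule l1)
qed

lemma ff_min:
  assumes q: "0 < q" "q < 1" and p: "0 < p" "p < 1" and c: "0 < c"
  shows "\<exists>z0\<in>{0<..<1}. \<forall>z\<in>{0<..<1}. ff q p c z0 \<le> ff q p c z"
proof -
  define A where "A = ff q p c (1/2)"
  have A0: "0 \<le> A" unfolding A_def using ff_lower[OF q p c, of "1/2"] by simp
  define a where "a = min (1/2) (c / (p*(A+1)))"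
  define b where "b = max (1/2) (1 - q powr (A+1))"
  have a: "0 < a" "a \<le> 1/2" unfolding a_def using c p A0 by (simp, simp only: min.cobounded1)
  have b: "1/2 \<le> b" "b < 1" unfolding b_def using q by auto
  have cont: "continuous_on {a..b} (ff q p c)"
  proof -
    have "\<forall>z\<in>{a..b}. 0 < z \<and> z < 1" using a b by auto
    moreover have "\<forall>z\<in>{a..b}. p*z < 1" using a b p mult_strict_mono[of p 1 _ 1] by auto
    ultimately show ?thesis unfolding ff_def using q p
      by (intro continuous_intros) auto
  qed
  obtain z0 where z0: "z0 \<in> {a..b}" "\<forall>y\<in>{a..b}. ff q p c z0 \<le> ff q p c y"
    using continuous_attains_inf[OF compact_Icc _ cont] a b by auto
  have z0A: "ff q p c z0 \<le> A" unfolding A_def using z0 a b by auto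
  have "\<forall>z\<in>{0<..<1}. ff q p c z0 \<le> ff q p c z"
  proof
    fix z :: real assume z: "z \<in> {0<..<1}"
    consider "z < a" | "z \<in> {a..b}" | "b < z" by force
    then show "ff q p c z0 \<le> ff q p c z"
    proof cases
      case 1
      then have "z < c / (p*(A+1))" unfolding a_def by simp
      then have "p*z*(A+1) < c" using p A0 by (simp add: less_divide_eq mult.commute mult.left_commute)
      then have "A + 1 < c / (p*z)" using p z by (simp add: less_divide_eq mult.commute)
      then show ?thesis using ff_lower(2)[OF q p c, of z] z z0A by auto
    next
      case 2 then show ?thesis using z0 by auto
    next
      case 3
      then have "1 - z < q powr (A+1)" unfolding b_def by simp
      then have "A + 1 < log q (1 - z)" using z q by (intro log_gt_small) auto
      then show ?thesis using ff_lower(1)[OF q p c, of z] z z0A by auto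
    qed
  qed
  moreover have "z0 \<in> {0<..<1}" using z0 a b by auto
  ultimately show ?thesis by blast
qed


lemma periodic_value:
  assumes q: "0 < q" "q < 1" and p: "0 < p" "p < 1" and c: "0 < c" and z: "0 < z" "z < 1"
  defines "s \<equiv> log q (1 - z)" and "u \<equiv> log q (1 - p*z)"
  shows "(\<Sum>j. ennreal ((periodic_seq s u j + c) * Pf q p (periodic_seq s u) j)) = ennreal (ff q p c z)"
proof -
  define \<rho> where "\<rho> = 1 - p*z"
  have pz: "0 < p*z" "p*z < 1" using p z mult_strict_mono[of p 1 z 1] by auto
  have \<rho>: "0 < \<rho>" "\<rho> < 1" unfolding \<rho>_def using pz by auto
  have s0: "0 \<le> s" unfolding s_def using q z by (intro log_nonneg_small) auto
  have u0: "0 \<le> u" unfolding u_def using q pz by (intro log_nonneg_small) auto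
  have X: "Xf q (periodic_seq s u) (Suc j) = (1 - z) * \<rho>^j" for j
  proof (induction j)
    case 0
    then show ?case using q z by (simp add: Xf_def periodic_seq_def s_def)
  next
    case (Suc j)
    then show ?case using q pz unfolding Xf_Suc[of q _ "Suc j"]
      by (simp add: periodic_seq_def u_def \<rho>_def)
  qed
  have P: "Pf q p (periodic_seq s u) j = \<rho>^j" for j
  proof (induction j)
    case 0 then show ?case by simp
  next
    case (Suc j)
    then show ?case by (simp add: X \<rho>_def algebra_simps)
  qed
  have eqf: "(\<lambda>j. (periodic_seq s u j + c) * Pf q p (periodic_seq s u) j) =
     (\<lambda>j. (u + c) * \<rho>^j + (if j = 0 then s - u else 0))"
    by (rule ext) (simp only: P, simp add: periodic_seq_def algebra_simps)
  have "(\<lambda>j. (u + c) * \<rho>^j + (if j = 0 then s - u else 0)) sums ((u + c) * (1 / (1 - \<rho>)) + (s - u))"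
  proof (rule sums_add)
    show "(\<lambda>j. (u + c) * \<rho>^j) sums ((u + c) * (1 / (1 - \<rho>)))"
      by (rule sums_mult) (rule geometric_sums, use \<rho> in simp)
    show "(\<lambda>j. if j = 0 then s - u else 0) sums (s - u)"
      using sums_single[of 0 "\<lambda>_. s - u"] by simp
  qed
  moreover have "(u + c) * (1 / (1 - \<rho>)) + (s - u) = ff q p c z"
    unfolding ff_def s_def u_def \<rho>_def using pz p z by (simp add: field_simps)
  ultimately have sm: "(\<lambda>j. (periodic_seq s u j + c) * Pf q p (periodic_seq s u) j) sums ff q p c z"
    unfolding eqf by simp
  show ?thesis
  proof (rule suminf_ennreal_eq[OF _ sm])
    fix j show "0 \<le> (periodic_seq s u j + c) * Pf q p (periodic_seq s u) j"
      using s0 u0 c \<rho> by (simp only: P, simp add: periodic_seq_def)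
  qed
qed


lemma key_ineq:
  assumes q: "0 < q" "q < 1" and p: "0 < p" "p < 1" and c: "0 < c"
    and m: "\<forall>z\<in>{0<..<1}. m \<le> ff q p c z" and z: "0 \<le> z" "z < 1"
  shows "m*p*z \<le> c + p*z*log q (1-z) + (1-p*z)*log q (1-p*z)"
proof (cases "z = 0")
  case True then show ?thesis using c by simp
next
  case False
  then have z0: "0 < z" using z by simp
  have "m \<le> ff q p c z" using m z0 z by auto
  then have "p*z*m \<le> p*z*ff q p c z" using p z0 by (intro mult_left_mono) auto
  also have "p*z*ff q p c z = c + p*z*log q (1-z) + (1-p*z)*log q (1-p*z)"
    unfolding ff_def using p z0 by (simp add: field_simps)
  finally show ?thesis by (simp add: mult.commute mult.left_commute)
qed

theorem mainTheorem14:
  fixes p1 p2 c :: real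
  assumes "0 < p1" "p1 < 1" "0 < p2" "p2 < 1" "0 < c"
  shows "\<exists>s t. 0 < s \<and> 0 < t \<and>
           (\<forall>\<pi>. semi_fractional \<pi> \<longrightarrow>
                 expected_time p1 p2 c (periodic_seq s t) \<le> expected_time p1 p2 c \<pi>) \<and>
           (\<exists>z0\<in>{0<..<1}.
              (\<forall>z\<in>{0<..<1}.
                 log (1 - p1) (1 - z0) + (c + (1 - p2 * z0) * log (1 - p1) (1 - p2 * z0)) / (p2 * z0)
                 \<le> log (1 - p1) (1 - z) + (c + (1 - p2 * z) * log (1 - p1) (1 - p2 * z)) / (p2 * z)) \<and>
              expected_time p1 p2 c (periodic_seq s t) =
                ennreal (log (1 - p1) (1 - z0) + (c + (1 - p2 * z0) * log (1 - p1) (1 - p2 * z0)) / (p2 * z0)))"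
proof -
  define q where "q = 1 - p1"
  have q: "0 < q" "q < 1" unfolding q_def using assms by auto
  have p: "0 < p2" "p2 < 1" and c: "0 < c" and p1: "0 < p1" "p1 < 1" using assms by auto
  obtain z0 where z0: "z0 \<in> {0<..<1}" and zmin: "\<forall>z\<in>{0<..<1}. ff q p2 c z0 \<le> ff q p2 c z"
    using ff_min[OF q p c] by blast
  define s where "s = log q (1 - z0)"
  define u where "u = log q (1 - p2*z0)"
  have pz: "0 < p2*z0" "p2*z0 < 1" using p z0 mult_strict_mono[of p2 1 z0 1] by auto
  have s0: "0 < s" unfolding s_def using q z0 by (intro log_gt_small[of q "1-z0" 0, simplified]) auto
  have u0: "0 < u" unfolding u_def using q pz by (intro log_gt_small[of q "1-p2*z0" 0, simplified]) auto
  have per: "\<And>i. 0 \<le> periodic_seq s u i" using s0 u0 by (simp add: periodic_seq_def)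
  have Eper: "expected_time p1 p2 c (periodic_seq s u) = ennreal (ff q p2 c z0)"
  proof -
    have "expected_time p1 p2 c (periodic_seq s u) = (\<Sum>j. ennreal ((periodic_seq s u j + c) * Pf (1-p1) p2 (periodic_seq s u) j))"
      by (rule expected_formula[OF p1 _ _ c per]) (use p in auto)
    also have "\<dots> = ennreal (ff q p2 c z0)"
      unfolding q_def[symmetric] s_def u_def using periodic_value[OF q p c, of z0] z0 by auto
    finally show ?thesis .
  qed
  have opt: "expected_time p1 p2 c (periodic_seq s u) \<le> expected_time p1 p2 c \<pi>"
    if "semi_fractional \<pi>" for \<pi>
  proof -
    have t: "\<And>i. 0 \<le> \<pi> i" using that by (simp add: semi_fractional_def)
    have "ennreal (ff q p2 c z0) \<le> (\<Sum>j. ennreal ((\<pi> j + c) * Pf q p2 \<pi> j))"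
      by (rule lower_bound[OF q p c t]) (rule key_ineq[OF q p c _], use zmin in auto)
    also have "\<dots> = expected_time p1 p2 c \<pi>"
      unfolding q_def by (rule expected_formula[OF p1 _ _ c t, symmetric]) (use p in auto)
    finally show ?thesis unfolding Eper .
  qed
  show ?thesis
    apply (rule exI[of _ s], rule exI[of _ u])
    using s0 u0 opt z0 zmin Eper unfolding ff_def q_def by blast
qed

end
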